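(* Let $n=3$, $A\in\mathbb{R}^{3\times 3}$ and $C\in\mathbb{R}^{1\times 3}$. Assume that $(A,C)$ is an observable pair, that all eigenvalues of $A$ are nonzero, and that $C\neq \alpha CA^{t}$ for all positive integers $t$ and all $\alpha\in\mathbb{R}$. Let $t_1,t_2$ be any two distinct nonnegative integers, let $\Delta$ be a positive integer that is not a pathological sampling period of $A$, and set $t_3=t_1+\Delta$, $t_4=t_2+\Delta$. Then the matrix with rows $CA^{t_1},CA^{t_2},CA^{t_3},CA^{t_4}$ has rank $3$.
   Context: Setting: discrete-time single-output system $x(t+1)=Ax(t)+Bu(t)$, $y(t)=Cx(t)+Du(t)$ with output measured only at selected time instances; the sample-based observability matrix for instances $t_1,\ldots,t_l$ is the matrix with rows $CA^{t_1},\ldots,CA^{t_l}$. $(A,C)$ is observable if the matrix with rows $C,CA,\ldots,CA^{n-1}$ has rank $n$. A positive integer $h$ is a pathological sampling period of $A$ if there exist two distinct eigenvalues $\lambda_p\neq\lambda_q$ of $A$ in different Jordan blocks with $\lambda_p^h=\lambda_q^h$. *)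

theory Defs
  imports "HOL-Analysis.Analysis"
begin

primrec matpow :: "'a::semiring_1^'n^'n \<Rightarrow> nat \<Rightarrow> 'a^'n^'n" where
  "matpow A 0 = mat 1"
| "matpow A (Suc k) = matpow A k ** A"

definition cmat :: "real^'n^'m \<Rightarrow> complex^'n^'m" where
  "cmat A = (\<chi> i j. complex_of_real (A $ i $ j))"

definition is_eigenvalue :: "real^'n^'n \<Rightarrow> complex \<Rightarrow> bool" where
  "is_eigenvalue A lam \<longleftrightarrow> (\<exists>v::complex^'n. v \<noteq> 0 \<and> cmat A *v v = lam *s v)"

definition observable3 :: "real^3^3 \<Rightarrow> real^3 \<Rightarrow> bool" where
  "observable3 A C \<longleftrightarrow>
     rank (\<chi> i::3. C v* matpow A (if i = 0 then 0 else if i = 1 then 1 else 2)) = 3"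

text \<open>Pathological sampling period. Two distinct eigenvalues always lie in
  different Jordan blocks, so that clause of the definition is automatic.\<close>
definition pathological_period :: "real^'n^'n \<Rightarrow> nat \<Rightarrow> bool" where
  "pathological_period A h \<longleftrightarrow> h > 0 \<and>
     (\<exists>lp lq. is_eigenvalue A lp \<and> is_eigenvalue A lq \<and> lp \<noteq> lq \<and> lp ^ h = lq ^ h)"

definition sample_obs4 :: "real^3^3 \<Rightarrow> real^3 \<Rightarrow> nat \<Rightarrow> nat \<Rightarrow> nat \<Rightarrow> nat \<Rightarrow> real^3^4" where
  "sample_obs4 A C t1 t2 t3 t4 =
     (\<chi> i::4. C v* matpow A (if i = 1 then t1 else if i = 2 then t2 else if i = 3 then t3 else t4))"

end

theory Submission
  imports Defs "HOL-Computational_Algebra.Fundamental_Theorem_Algebra"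
begin


lemma order_compose_le:
  fixes g :: "complex poly" and l :: complex
  assumes g: "g \<noteq> 0" and D: "D > 0" and l: "l \<noteq> 0"
  shows "order l (pcompose g (monom 1 D)) \<le> order (l^D) g"
proof -
  define mu where "mu = l^D"
  obtain g1 where g1: "g = [:-mu,1:] ^ order mu g * g1" and ng1: "\<not> [:-mu,1:] dvd g1"
    using order_decomp[OF g] by blast
  have pg1: "poly g1 mu \<noteq> 0" using ng1 poly_eq_0_iff_dvd by blast
  have "poly (monom 1 D - [:mu:]) l = 0" by (simp add: poly_monom mu_def)
  then obtain h where h: "monom 1 D - [:mu:] = [:-l,1:] * h" using poly_eq_0_iff_dvd by blast
  have "poly (pderiv ([:-l,1:] * h)) l = poly h l"
    by (simp only: pderiv_mult poly_add poly_mult) (simp add: pderiv_pCons)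
  hence "poly (pderiv (monom (1::complex) D - [:mu:])) l = poly h l" using h by simp
  moreover have "poly (pderiv (monom (1::complex) D - [:mu:])) l = of_nat D * l^(D-1)"
    by (simp add: pderiv_monom pderiv_diff poly_monom)
  ultimately have ph: "poly h l \<noteq> 0" using D l by (metis of_nat_eq_0_iff power_not_zero mult_eq_0_iff neq0_conv)
  have pc: "pcompose [:-mu,1:] (monom 1 D) = monom 1 D - [:mu:]"
    by (simp add: pcompose_pCons)
  have pcomp: "pcompose ([:-mu,1:] ^ n) (monom 1 D) = (monom 1 D - [:mu:])^n" for n
  proof (induction n)
    case (Suc n)
    have "pcompose ([:-mu,1:] ^ Suc n) (monom 1 D) = pcompose ([:-mu,1:] * [:-mu,1:] ^ n) (monom 1 D)"
      by (simp only: power_Suc)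
    also have "\<dots> = pcompose [:-mu,1:] (monom 1 D) * pcompose ([:-mu,1:] ^ n) (monom 1 D)"
      by (rule pcompose_mult)
    finally show ?case using Suc by (simp only: pc power_Suc)
  qed (simp add: pcompose_1)
  define r where "r = h ^ order mu g * pcompose g1 (monom 1 D)"
  have q: "pcompose g (monom 1 D) = [:-l,1:] ^ order mu g * r"
  proof -
    have "pcompose g (monom 1 D) = pcompose ([:-mu,1:] ^ order mu g) (monom 1 D) * pcompose g1 (monom 1 D)"
      by (subst g1) (rule pcompose_mult)
    also have "\<dots> = ([:-l,1:] * h) ^ order mu g * pcompose g1 (monom 1 D)"
      by (simp only: pcomp h)
    finally show ?thesis by (simp only: r_def power_mult_distrib mult.assoc)
  qed
  have pr: "poly r l \<noteq> 0" using ph pg1 by (simp add: r_def poly_pcompose poly_monom mu_def)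
  hence "r \<noteq> 0" by auto
  hence "order l (pcompose g (monom 1 D)) = order mu g + order l r"
    by (simp add: q order_mult order_power_n_n)
  also have "order l r = 0" using pr by (simp add: order_0I)
  finally show ?thesis by (simp add: mu_def)
qed

lemma poly_key:
  fixes chi g :: "complex poly" and D :: nat
  assumes deg: "degree chi = 3" and dv: "chi dvd pcompose g (monom 1 D)" and dg: "degree g \<le> 2"
    and D: "D > 0"
    and nz: "\<And>l. poly chi l = 0 \<Longrightarrow> l \<noteq> 0"
    and inj: "\<And>l m. poly chi l = 0 \<Longrightarrow> poly chi m = 0 \<Longrightarrow> l^D = m^D \<Longrightarrow> l = m"
  shows "g = 0"
proof (rule ccontr)
  assume g: "g \<noteq> 0"
  define q where "q = pcompose g (monom (1::complex) D)"
  have dm: "degree (monom (1::complex) D) > 0" using D by (simp add: degree_monom_eq)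
  have q0: "q \<noteq> 0" using g pcompose_eq_0[OF _ dm] unfolding q_def by metis
  have c0: "chi \<noteq> 0" using deg by auto
  have ord: "order l chi \<le> order (l^D) g" if "poly chi l = 0" for l
  proof -
    have "[:-l,1:] ^ order l chi dvd q" using order_1 dv q_def dvd_trans by blast
    hence "order l chi \<le> order l q" using q0 order_divides by blast
    also have "\<dots> \<le> order (l^D) g" unfolding q_def by (rule order_compose_le[OF g D nz[OF that]])
    finally show ?thesis .
  qed
  have sub: "image_mset (\<lambda>l. l^D) (proots chi) \<subseteq># proots g"
  proof (rule mset_subset_eqI)
    fix m
    show "count (image_mset (\<lambda>l. l^D) (proots chi)) m \<le> count (proots g) m"
    proof (cases "\<exists>l. poly chi l = 0 \<and> l^D = m")
      case True
      then obtain l where l: "poly chi l = 0" "l^D = m" by blast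
      have "(\<lambda>l. l^D) -` {m} \<inter> set_mset (proots chi) = {l}"
        using l inj c0 by auto
      hence "count (image_mset (\<lambda>l. l^D) (proots chi)) m = order l chi"
        by (simp add: count_image_mset c0)
      also have "\<dots> \<le> order m g" using ord[OF l(1)] l(2) by simp
      finally show ?thesis using g by simp
    next
      case False
      hence "(\<lambda>l. l^D) -` {m} \<inter> set_mset (proots chi) = {}" using c0 by auto
      hence "count (image_mset (\<lambda>l. l^D) (proots chi)) m = 0"
        by (simp add: count_image_mset)
      thus ?thesis by simp
    qed
  qed
  have "3 = size (image_mset (\<lambda>l. l^D) (proots chi))" using deg by (simp add: size_proots_complex)
  also have "\<dots> \<le> size (proots g)" by (rule size_mset_mono[OF sub])
  also have "\<dots> = degree g" by (simp add: size_proots_complex)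
  finally show False using dg by simp
qed



lemma vm_add: "(x + y) v* (M::'a::comm_ring_1^'n^'m) = x v* M + y v* M"
  by (simp add: vector_matrix_mult_def vec_eq_iff sum.distrib distrib_right)

lemma vm_smult: "(a *s x) v* (M::'a::comm_ring_1^'n^'m) = a *s (x v* M)"
  by (simp add: vector_matrix_mult_def vec_eq_iff sum_distrib_left mult_ac)

lemma vm_sum: "(\<Sum>i\<in>I. f i) v* (M::'a::comm_ring_1^'n^'m) = (\<Sum>i\<in>I. f i v* M)"
  by (induction I rule: infinite_finite_induct) (simp_all add: vm_add)

lemma smult_sum: "(a::'a::comm_ring_1) *s (\<Sum>i\<in>I. f i) = (\<Sum>i\<in>I. a *s f i)"
  by (induction I rule: infinite_finite_induct) (simp_all add: vector_add_ldistrib)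

lemma vm_zero: "0 v* (M::'a::comm_ring_1^'n^'m) = 0" by simp

lemma matpow_add: "matpow M (a + b) = matpow M a ** matpow M b"
  by (induction b) (simp_all add: matrix_mul_assoc)

lemma matpow_Suc': "matpow M (Suc k) = M ** matpow M k"
  using matpow_add[of M 1 k] by simp

lemma matpow_comm: "matpow M a ** matpow M b = matpow M b ** matpow M a"
  by (metis matpow_add add.commute)

lemma matpow_mult: "matpow M (a * b) = matpow (matpow M a) b"
proof (induction b)
  case (Suc b)
  have "matpow M (a * Suc b) = matpow M (a*b + a)" by (simp add: add.commute)
  also have "\<dots> = matpow M (a*b) ** matpow M a" by (rule matpow_add)
  finally show ?case using Suc by simp
qed simp

definition ev :: "'a::field^'n^'n \<Rightarrow> 'a^'n \<Rightarrow> 'a poly \<Rightarrow> 'a^'n" where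
  "ev M c p = (\<Sum>i\<le>degree p. coeff p i *s (c v* matpow M i))"

lemma ev_bound:
  assumes "degree p \<le> n"
  shows "ev M c p = (\<Sum>i\<le>n. coeff p i *s (c v* matpow M i))"
  unfolding ev_def
  by (rule sum.mono_neutral_left) (use assms in \<open>auto simp: coeff_eq_0 not_le\<close>)

lemma ev_add: "ev M c (p + q) = ev M c p + ev M c q"
proof -
  define n where "n = max (degree p) (max (degree q) (degree (p+q)))"
  show ?thesis
    by (subst (1 2 3) ev_bound[where n=n]) (auto simp: n_def sum.distrib vector_sadd_rdistrib)
qed

lemma ev_smult: "ev M c (smult a p) = a *s ev M c p"
proof -
  show ?thesis
    by (subst (1 2) ev_bound[where n="degree p"]) 
       (auto simp: smult_sum vector_smult_assoc degree_smult_le)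
qed

lemma ev_0[simp]: "ev M c 0 = 0" by (simp add: ev_def)

lemma ev_minus: "ev M c (p - q) = ev M c p - ev M c q"
  by (metis ev_add diff_add_cancel eq_diff_eq)

lemma ev_monom: "ev M c (monom a k) = a *s (c v* matpow M k)"
proof -
  have "\<And>i. coeff (monom a k) i *s (c v* matpow M i) = (if i = k then a *s (c v* matpow M k) else 0)"
    by (simp add: coeff_monom)
  hence "ev M c (monom a k) = (\<Sum>i\<le>k. (if i = k then a *s (c v* matpow M k) else 0))"
    by (subst ev_bound[where n=k]) (simp_all add: degree_monom_le)
  thus ?thesis by (simp add: sum.delta')
qed

lemma ev_pCons0: "ev M c (pCons 0 p) = ev M c p v* M"
proof -
  have "ev M c (pCons 0 p) = (\<Sum>i\<le>Suc (degree p). coeff (pCons 0 p) i *s (c v* matpow M i))"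
    by (rule ev_bound) (simp add: degree_pCons_le)
  also have "\<dots> = (\<Sum>i\<le>degree p. coeff p i *s (c v* matpow M (Suc i)))"
    by (subst sum.atMost_Suc_shift) simp
  also have "\<dots> = (\<Sum>i\<le>degree p. (coeff p i *s (c v* matpow M i)) v* M)"
    by (simp add: vm_smult vector_matrix_mul_assoc)
  also have "\<dots> = ev M c p v* M" by (simp add: ev_def vm_sum)
  finally show ?thesis .
qed

lemma pCons_as: "pCons a p = [:a:] + pCons 0 p"
  by simp

lemma ev_pCons: "ev M c (pCons a p) = a *s c + ev M c p v* M"
proof -
  have "ev M c [:a:] = a *s c" by (simp add: ev_def)
  have "ev M c (pCons a p) = ev M c ([:a:] + pCons 0 p)" by simp
  thus ?thesis using \<open>ev M c [:a:] = a *s c\<close> by (simp only: ev_add ev_pCons0)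
qed

lemma ev_deg2:
  assumes "degree p \<le> 2"
  shows "ev M c p = coeff p 0 *s c + coeff p 1 *s (c v* M) + coeff p 2 *s (c v* matpow M 2)"
  by (subst ev_bound[OF assms]) (simp add: numeral_2_eq_2)

lemma ev_mult_chi:
  assumes rel: "c v* matpow M 3 = a0 *s c + a1 *s (c v* M) + a2 *s (c v* matpow M 2)"
  shows "ev M c (s * [:-a0,-a1,-a2,1:]) = 0"
proof (induction s)
  case 0 then show ?case by simp
next
  case (pCons a s)
  have r: "c v* (M ** M ** M) = a0 *s c + a1 *s (c v* M) + a2 *s (c v* (M ** M))"
    using rel by (simp add: numeral_3_eq_3 numeral_2_eq_2)
  have "ev M c [:-a0,-a1,-a2,1:] = (-a0) *s c + ((-a1) *s (c v* M) + ((-a2) *s (c v* (M ** M)) + c v* (M ** M ** M)))"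
    by (simp add: ev_pCons vm_add vm_smult vector_matrix_mul_assoc vector_matrix_mult_diff_distrib)
  also have "\<dots> = 0" unfolding r by (simp add: vec_eq_iff algebra_simps)
  finally have chi: "ev M c [:-a0,-a1,-a2,1:] = 0" .
  have "pCons a s * [:-a0,-a1,-a2,1:] = smult a [:-a0,-a1,-a2,1:] + pCons 0 (s * [:-a0,-a1,-a2,1:])"
    by simp
  then show ?case using pCons chi by (simp only: ev_add ev_smult ev_pCons0) simp
qed



lemma vm_rows: "x v* (R::'a::comm_ring_1^'n^'m) = (\<Sum>i\<in>UNIV. x$i *s R$i)"
  unfolding vec_eq_iff vector_matrix_mult_def by (simp add: sum_component)

lemma span3:
  fixes u v w :: "'a::field^3"
  assumes ind: "\<And>a b c. a *s u + b *s v + c *s w = 0 \<Longrightarrow> a = 0 \<and> b = 0 \<and> c = 0"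
  shows "\<exists>a b c. y = a *s u + b *s v + c *s w"
proof -
  define R where "R = (\<chi> i::3. if i = 1 then u else if i = 2 then v else w)"
  have R: "x v* R = x$1 *s u + x$2 *s v + x$3 *s w" for x
    by (subst vm_rows) (simp add: sum_3 R_def)
  have "\<forall>x. transpose R *v x = 0 \<longrightarrow> x = 0"
  proof (intro allI impI)
    fix x :: "'a^3" assume "transpose R *v x = 0"
    hence "x$1 *s u + x$2 *s v + x$3 *s w = 0" by (simp add: R)
    from ind[OF this] show "x = 0" by (simp add: vec_eq_iff forall_3)
  qed
  hence "\<exists>B. B ** transpose R = mat 1" by (simp only: matrix_left_invertible_ker)
  hence "invertible (transpose R)" by (simp only: invertible_left_inverse)
  hence "\<exists>B'. transpose R ** B' = mat 1" by (simp only: invertible_right_inverse)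
  then obtain B' where B': "transpose R ** B' = mat 1" by (elim exE)
  have "y = transpose R *v (B' *v y)" by (simp add: matrix_vector_mul_assoc B')
  hence "y = (B' *v y) v* R" by simp
  thus ?thesis unfolding R by blast
qed

definition cv :: "real^'n \<Rightarrow> complex^'n" where
  "cv v = (\<chi> i. complex_of_real (v$i))"

lemma cv_nth[simp]: "cv v $ i = complex_of_real (v$i)" by (simp add: cv_def)

lemma cmat_nth[simp]: "cmat A $ i $ j = complex_of_real (A$i$j)" by (simp add: cmat_def)

lemma cv_vm: "cv (x v* M) = cv x v* cmat M"
  by (simp add: vec_eq_iff vector_matrix_mult_def)

lemma cv_mv: "cv (M *v x) = cmat M *v cv x"
  by (simp add: vec_eq_iff matrix_vector_mult_def)

lemma cmat_mult: "cmat (X ** Y) = cmat X ** cmat Y"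
  by (simp add: vec_eq_iff matrix_matrix_mult_def)

lemma cmat_one: "cmat (mat 1) = mat 1"
  by (simp add: vec_eq_iff mat_def)

lemma cmat_matpow: "cmat (matpow A k) = matpow (cmat A) k"
  by (induction k) (simp_all add: cmat_one cmat_mult)

lemma cv_add: "cv (x + y) = cv x + cv y" by (simp add: vec_eq_iff)
lemma cv_smult: "cv (a *s x) = complex_of_real a *s cv x" by (simp add: vec_eq_iff)
lemma cv_eq0: "cv x = 0 \<longleftrightarrow> x = 0" by (simp add: vec_eq_iff)

lemma obs_real:
  assumes "observable3 A C"
  shows "a *s C + b *s (C v* A) + c *s (C v* matpow A 2) = 0 \<Longrightarrow> a = 0 \<and> b = 0 \<and> c = 0"
proof -
  define Ob where "Ob = (\<chi> i::3. C v* matpow A (if i = 0 then 0 else if i = 1 then 1 else 2))"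
  have "rank Ob = 3" using assms unfolding observable3_def Ob_def .
  hence "rank (transpose Ob) = CARD(3)" by (simp add: rank_transpose)
  hence inj: "inj ((*v) (transpose Ob))" using full_rank_injective by blast
  have Ox: "transpose Ob *v x = x$1 *s (C v* A) + x$2 *s (C v* matpow A 2) + x$3 *s C" for x
    unfolding transpose_matrix_vector by (subst vm_rows) (simp add: sum_3 Ob_def)
  assume h: "a *s C + b *s (C v* A) + c *s (C v* matpow A 2) = 0"
  have "transpose Ob *v (vector [b, c, a]) = 0" unfolding Ox using h by (simp add: algebra_simps)
  hence "vector [b, c, a] = (0::real^3)" using inj by (metis matrix_vector_mult_0_right injD)
  thus ?thesis by (metis vector_1 vector_2 vector_3 zero_index)
qed

lemma obs_complex:
  assumes "observable3 A C"
  shows "a *s cv C + b *s (cv C v* cmat A) + c *s (cv C v* matpow (cmat A) 2) = 0 \<Longrightarrow> a = 0 \<and> b = 0 \<and> c = 0"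
proof -
  assume h: "a *s cv C + b *s (cv C v* cmat A) + c *s (cv C v* matpow (cmat A) 2) = 0"
  have h': "a *s cv C + b *s cv (C v* A) + c *s cv (C v* matpow A 2) = 0"
    using h by (simp add: cv_vm cmat_matpow)
  have hr: "Re a *s C + Re b *s (C v* A) + Re c *s (C v* matpow A 2) = 0"
  proof -
    have "\<forall>i. Re ((a *s cv C + b *s cv (C v* A) + c *s cv (C v* matpow A 2)) $ i) = 0" using h' by simp
    thus ?thesis by (simp add: vec_eq_iff)
  qed
  have hi: "Im a *s C + Im b *s (C v* A) + Im c *s (C v* matpow A 2) = 0"
  proof -
    have "\<forall>i. Im ((a *s cv C + b *s cv (C v* A) + c *s cv (C v* matpow A 2)) $ i) = 0" using h' by simp
    thus ?thesis by (simp add: vec_eq_iff)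
  qed
  show ?thesis using obs_real[OF assms hr] obs_real[OF assms hi] by (simp add: complex_eq_iff)
qed



lemma vm_mat: "x v* mat k = (k::'a::comm_ring_1) *s x"
  by (simp add: vec_eq_iff vector_matrix_mult_def mat_def if_distrib if_distribR cong: if_cong)

lemma mv_mat: "mat k *v x = (k::'a::comm_ring_1) *s x"
  by (simp add: vec_eq_iff matrix_vector_mult_def mat_def if_distrib if_distribR cong: if_cong)

lemma ev_deg2_zero:
  fixes M :: "'a::field^3^3"
  assumes ind: "\<forall>a b c'. a *s c + b *s (c v* M) + c' *s (c v* matpow M 2) = 0 \<longrightarrow> a = 0 \<and> b = 0 \<and> c' = 0"
    and d: "degree p \<le> 2" and e: "ev M c p = 0"
  shows "p = 0"
proof -
  have z: "coeff p 0 = 0 \<and> coeff p 1 = 0 \<and> coeff p 2 = 0"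
    using ind e ev_deg2[OF d] by metis
  show ?thesis
  proof (rule poly_eqI)
    fix n
    show "coeff p n = coeff 0 n"
    proof (cases "n \<le> 2")
      case True
      hence "n = 0 \<or> n = 1 \<or> n = 2" by auto
      thus ?thesis using z by auto
    next
      case False thus ?thesis using d by (simp add: coeff_eq_0)
    qed
  qed
qed

lemma root_eig:
  fixes M :: "complex^3^3"
  assumes ind: "\<forall>a b c'. a *s c + b *s (c v* M) + c' *s (c v* matpow M 2) = 0 \<longrightarrow> a = 0 \<and> b = 0 \<and> c' = 0"
    and rel: "c v* matpow M 3 = a0 *s c + a1 *s (c v* M) + a2 *s (c v* matpow M 2)"
    and root: "poly [:-a0,-a1,-a2,1:] l = 0"
  shows "\<exists>v. v \<noteq> 0 \<and> M *v v = l *s v"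
proof -
  define chi where "chi = [:-a0,-a1,-a2,1::complex:]"
  obtain h where h: "chi = [:-l,1:] * h" using root poly_eq_0_iff_dvd chi_def by blast
  have dchi: "degree chi = 3" by (simp add: chi_def)
  have "h \<noteq> 0" using h dchi by auto
  hence "degree chi = degree [:-l,1::complex:] + degree h" unfolding h using degree_mult_eq[of "[:-l,1::complex:]" h] by simp
  hence "degree chi = 1 + degree h" by simp
  hence dh: "degree h \<le> 2" using dchi by simp
  define w where "w = ev M c h"
  have "w \<noteq> 0" using ev_deg2_zero[OF ind dh] \<open>h \<noteq> 0\<close> w_def by auto
  have "ev M c (1 * chi) = 0" unfolding chi_def by (rule ev_mult_chi[OF rel])
  hence "ev M c ([:-l,1:] * h) = 0" using h by simp
  moreover have "[:-l,1:] * h = smult (-l) h + pCons 0 h" by simp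
  ultimately have "(-l) *s w + w v* M = 0" by (simp only: ev_add ev_smult ev_pCons0 w_def)
  hence wM: "w v* (M - mat l) = 0"
    by (simp add: vector_matrix_mult_diff_rdistrib vm_mat vec_eq_iff algebra_simps)
  have "\<not> (\<exists>B. (M - mat l) ** B = mat 1)"
  proof
    assume "\<exists>B. (M - mat l) ** B = mat 1"
    then obtain B where B: "(M - mat l) ** B = mat 1" by blast
    have "w = (w v* (M - mat l)) v* B" by (simp add: vector_matrix_mul_assoc B)
    thus False using wM \<open>w \<noteq> 0\<close> by simp
  qed
  hence "\<not> invertible (M - mat l)" using invertible_right_inverse by metis
  hence "\<not> (\<exists>B. B ** (M - mat l) = mat 1)" using invertible_left_inverse by metis
  hence "\<not> (\<forall>x. (M - mat l) *v x = 0 \<longrightarrow> x = 0)" using matrix_left_invertible_ker by metis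
  then obtain v where v: "v \<noteq> 0" "(M - mat l) *v v = 0" by blast
  hence "M *v v = l *s v" by (simp add: matrix_vector_mult_diff_rdistrib mv_mat)
  thus ?thesis using v by blast
qed



lemma main_indep:
  fixes M :: "complex^3^3" and D :: nat
  assumes ind: "\<forall>a b c'. a *s c + b *s (c v* M) + c' *s (c v* matpow M 2) = 0 \<longrightarrow> a = 0 \<and> b = 0 \<and> c' = 0"
    and eig_nz: "\<And>l v. v \<noteq> 0 \<Longrightarrow> M *v v = l *s v \<Longrightarrow> l \<noteq> 0"
    and eig_inj: "\<And>l m v w. v \<noteq> 0 \<Longrightarrow> M *v v = l *s v \<Longrightarrow> w \<noteq> 0 \<Longrightarrow> M *v w = m *s w \<Longrightarrow> l^D = m^D \<Longrightarrow> l = m"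
    and D: "D > 0"
    and h: "g0 *s c + g1 *s (c v* matpow M D) + g2 *s (c v* matpow (matpow M D) 2) = 0"
  shows "g0 = 0 \<and> g1 = 0 \<and> g2 = 0"
proof -
  obtain a0 a1 a2 where rel: "c v* matpow M 3 = a0 *s c + a1 *s (c v* M) + a2 *s (c v* matpow M 2)"
    using span3[of c "c v* M" "c v* matpow M 2" "c v* matpow M 3"] ind by blast
  define chi where "chi = [:-a0,-a1,-a2,1::complex:]"
  have dchi: "degree chi = 3" by (simp add: chi_def)
  have chi0: "chi \<noteq> 0" using dchi by auto
  define g where "g = [:g0,g1,g2:]"
  define q where "q = pcompose g (monom 1 D)"
  have q: "q = monom g0 0 + monom g1 D + monom g2 (D + D)"
    by (simp add: q_def g_def pcompose_pCons mult_monom smult_monom algebra_simps monom_0)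
  have "matpow (matpow M D) 2 = matpow M (D + D)"
    by (simp add: matpow_add numeral_2_eq_2)
  hence evq: "ev M c q = 0" using h by (simp add: q ev_add ev_monom)
  have "ev M c (q div chi * chi) = 0" unfolding chi_def by (rule ev_mult_chi[OF rel])
  moreover have "q = q div chi * chi + q mod chi" by simp
  ultimately have "ev M c (q mod chi) = 0" using evq by (metis ev_add add_0)
  moreover have "degree (q mod chi) \<le> 2"
    using degree_mod_less[OF chi0, of q] dchi by auto
  ultimately have "q mod chi = 0" using ev_deg2_zero[OF ind] by blast
  hence dv: "chi dvd q" by (simp add: mod_eq_0_iff_dvd)
  have eig: "\<exists>v. v \<noteq> 0 \<and> M *v v = l *s v" if "poly chi l = 0" for l
    using root_eig[OF ind rel] that chi_def by blast
  have "g = 0"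
  proof (rule poly_key[OF dchi _ _ D])
    show "chi dvd pcompose g (monom 1 D)" using dv q_def by simp
    show "degree g \<le> 2" by (simp add: g_def)
    show "l \<noteq> 0" if "poly chi l = 0" for l using eig[OF that] eig_nz by blast
    show "l = m" if "poly chi l = 0" "poly chi m = 0" "l^D = m^D" for l m
      using eig[OF that(1)] eig[OF that(2)] eig_inj that(3) by blast
  qed
  thus ?thesis by (simp add: g_def)
qed



lemma invertible_one: "invertible (mat 1 :: 'a::semiring_1^'n^'n)"
  unfolding invertible_def by (rule exI[of _ "mat 1"]) simp

lemma invertible_matpow: "invertible A \<Longrightarrow> invertible (matpow A k)"
  by (induction k) (simp_all add: invertible_one invertible_mult)

lemma mv_inner: "(A *v x) $ i = inner (A $ i) (x::real^'n)"
  by (simp add: matrix_vector_mult_def inner_vec_def)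

lemma core:
  fixes A :: "real^3^3" and C x :: "real^3"
  assumes invA: "invertible A"
    and span: "\<forall>y. \<exists>a b c. y = a *s C + b *s (C v* matpow A D) + c *s (C v* matpow (matpow A D) 2)"
    and h3: "\<forall>t::nat. \<forall>\<alpha>::real. t > 0 \<longrightarrow> C \<noteq> \<alpha> *s (C v* matpow A t)"
    and lt: "t1 < t2"
    and x1: "inner (C v* matpow A t1) x = 0" and x2: "inner (C v* matpow A t2) x = 0"
    and x3: "inner (C v* matpow A (t1 + D)) x = 0" and x4: "inner (C v* matpow A (t2 + D)) x = 0"
  shows "x = 0"
proof -
  define d where "d = t2 - t1"
  have d0: "d > 0" using lt d_def by simp
  define P where "P = matpow A t1"
  define R where "R = matpow A d"
  define B where "B = matpow A D"
  define y where "y = P *v x"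
  have sh: "inner (C v* matpow A (k + t1)) x = inner (C v* matpow A k) y" for k
    by (simp add: matpow_add y_def P_def vector_matrix_mul_assoc[symmetric] dot_lmul_matrix)
  have e0: "inner C y = 0" using x1 sh[of 0] by simp
  have eR: "inner (C v* R) y = 0" using x2 sh[of d] lt by (simp add: R_def d_def)
  have eB: "inner (C v* B) y = 0" using x3 sh[of D] by (simp add: B_def add.commute)
  have "t2 + D = (d + D) + t1" using lt d_def by simp
  hence "inner (C v* matpow A ((d + D) + t1)) x = 0" using x4 by metis
  hence "inner (C v* matpow A (d + D)) y = 0" by (simp only: sh)
  hence eRB: "inner ((C v* R) v* B) y = 0"
    by (simp only: R_def B_def matpow_add vector_matrix_mul_assoc)
  have B2: "(C v* B) v* B = C v* matpow B 2"
    by (simp add: numeral_2_eq_2 vector_matrix_mul_assoc)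
  define s where "s = inner (C v* matpow B 2) y"
  have y0: "y = 0"
  proof (cases "s = 0")
    case True
    obtain a b c where y: "y = a *s C + b *s (C v* B) + c *s (C v* matpow B 2)"
      using span B_def by blast
    have "inner y y = 0"
      by (subst (1) y) (simp add: inner_add_left scalar_mult_eq_scaleR e0 eB True[unfolded s_def])
    thus ?thesis by simp
  next
    case False
    obtain al be ga where r: "C v* R = al *s C + be *s (C v* B) + ga *s (C v* matpow B 2)"
      using span B_def by blast
    have "ga * s = 0" using eR unfolding r
      by (simp add: inner_add_left scalar_mult_eq_scaleR e0 eB s_def)
    hence ga: "ga = 0" using False by simp
    have "(C v* R) v* B = al *s (C v* B) + be *s (C v* matpow B 2)"
      unfolding r ga by (simp add: vm_add vm_smult B2)
    hence "be * s = 0" using eRB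
      by (simp add: inner_add_left scalar_mult_eq_scaleR eB s_def)
    hence be: "be = 0" using False by simp
    have CR: "C v* R = al *s C" using r ga be by simp
    show ?thesis
    proof (cases "al = 0")
      case True
      obtain R' where R': "R ** R' = mat 1" using invertible_matpow[OF invA] R_def invertible_def by blast
      have "C = (C v* R) v* R'" by (simp add: vector_matrix_mul_assoc R')
      hence "C = 0" using CR True by simp
      thus ?thesis using h3 d0 by force
    next
      case False
      have "C = (1/al) *s (C v* R)" using CR False by simp
      thus ?thesis using h3 d0 R_def by blast
    qed
  qed
  obtain P' where P': "P' ** P = mat 1" using invertible_matpow[OF invA] P_def invertible_def by blast
  have "x = P' *v y" by (simp add: y_def matrix_vector_mul_assoc P')
  thus ?thesis using y0 by simp
qed



theorem theorem3:
  fixes A :: "real^3^3" and C :: "real^3" and t1 t2 \<Delta> :: nat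
  assumes "observable3 A C"
    and "\<forall>lam. is_eigenvalue A lam \<longrightarrow> lam \<noteq> 0"
    and "\<forall>t::nat. \<forall>\<alpha>::real. t > 0 \<longrightarrow> C \<noteq> \<alpha> *s (C v* matpow A t)"
    and "t1 \<noteq> t2"
    and "\<Delta> > 0"
    and "\<not> pathological_period A \<Delta>"
  shows "rank (sample_obs4 A C t1 t2 (t1 + \<Delta>) (t2 + \<Delta>)) = 3"
proof -
  note obs = assms(1) and eignz = assms(2) and h3 = assms(3) and D = assms(5) and np = assms(6)
  have invA: "invertible A"
  proof (rule ccontr)
    assume "\<not> invertible A"
    hence "\<not> (\<exists>B. B ** A = mat 1)" using invertible_left_inverse by metis
    hence "\<not> (\<forall>x. A *v x = 0 \<longrightarrow> x = 0)" using matrix_left_invertible_ker by metis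
    then obtain x where x: "x \<noteq> 0" "A *v x = 0" by blast
    have "cv x \<noteq> 0" using x cv_eq0 by blast
    moreover have "cmat A *v cv x = 0 *s cv x" using x by (simp add: cv_mv[symmetric] cv_eq0)
    ultimately have "is_eigenvalue A 0" unfolding is_eigenvalue_def by blast
    thus False using eignz by blast
  qed
  define M where "M = cmat A"
  define c where "c = cv C"
  have indc: "\<forall>a b c'. a *s c + b *s (c v* M) + c' *s (c v* matpow M 2) = 0 \<longrightarrow> a = 0 \<and> b = 0 \<and> c' = 0"
    using obs_complex[OF obs] unfolding M_def c_def by blast
  have eig_nz: "l \<noteq> 0" if "v \<noteq> 0" "M *v v = l *s v" for l v
    using that eignz unfolding is_eigenvalue_def M_def by blast
  have eig_inj: "l = m" if "v \<noteq> 0" "M *v v = l *s v" "w \<noteq> 0" "M *v w = m *s w" "l^\<Delta> = m^\<Delta>" for l m v w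
    using that np D unfolding pathological_period_def is_eigenvalue_def M_def by blast
  define B where "B = matpow A \<Delta>"
  have indr: "a = 0 \<and> b = 0 \<and> g = 0" if "a *s C + b *s (C v* B) + g *s (C v* matpow B 2) = 0" for a b g
  proof -
    have "cv (a *s C + b *s (C v* B) + g *s (C v* matpow B 2)) = 0" using that cv_eq0 by metis
    hence "complex_of_real a *s c + complex_of_real b *s (c v* matpow M \<Delta>) + complex_of_real g *s (c v* matpow (matpow M \<Delta>) 2) = 0"
      by (simp add: cv_add cv_smult cv_vm cmat_matpow B_def M_def c_def)
    from main_indep[OF indc eig_nz eig_inj D this] show ?thesis by simp
  qed
  have span: "\<forall>y. \<exists>a b g. y = a *s C + b *s (C v* matpow A \<Delta>) + g *s (C v* matpow (matpow A \<Delta>) 2)"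
    using span3[of C "C v* B" "C v* matpow B 2"] indr unfolding B_def by blast
  define S where "S = sample_obs4 A C t1 t2 (t1 + \<Delta>) (t2 + \<Delta>)"
  have rows: "S $ 1 = C v* matpow A t1" "S $ 2 = C v* matpow A t2" "S $ 3 = C v* matpow A (t1 + \<Delta>)"
      "S $ 0 = C v* matpow A (t2 + \<Delta>)"
    by (simp_all add: S_def sample_obs4_def)
  have ker: "x = 0" if "S *v x = 0" for x
  proof -
    have i: "inner (S $ i) x = 0" for i using that mv_inner[of S x i] by simp
    show ?thesis
    proof (cases "t1 < t2")
      case True
      show ?thesis by (rule core[OF invA span h3 True]) (use i[of 1] i[of 2] i[of 3] i[of 0] rows in simp_all)
    next
      case False
      hence "t2 < t1" using assms(4) by simp
      show ?thesis by (rule core[OF invA span h3 \<open>t2 < t1\<close>]) (use i[of 1] i[of 2] i[of 3] i[of 0] rows in simp_all)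
    qed
  qed
  have "inj ((*v) S)"
  proof (rule injI)
    fix x y assume "S *v x = S *v y"
    hence "S *v (x - y) = 0" by (simp add: matrix_vector_mult_diff_distrib)
    thus "x = y" using ker[of "x - y"] by simp
  qed
  hence "rank S = CARD(3)" using full_rank_injective by blast
  thus ?thesis by (simp add: S_def)
qed

end
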